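(* Let $G$ be a connected finite simple undirected graph with at least two vertices, $W:V_G\to\mathbb{R}$ a potential, $\psi$ the ground state of $H_{G,W}$ with $\psi(x)>0$ for all $x$ and $\sum_x\psi(x)^2=1$, and $\gamma_H$ the gap between the smallest and second-smallest eigenvalues of $H_{G,W}$. For each ordered pair $(x,y)$ of distinct vertices choose a path $\gamma_{xy}$ in $G$ from $x$ to $y$ that traverses no edge more than once, and let $\Gamma$ be this collection of paths. Then $\gamma_H\ge 1/\kappa'$, where $$\kappa'=\max_{e}\sum_{\gamma_{xy}\ni e}\psi(x)^2\psi(y)^2\sum_{g\in\gamma_{xy}}\frac{1}{\psi(g_1)\psi(g_2)},$$ the maximum is over edges $e$ of $G$, the outer sum is over the paths in $\Gamma$ that use the edge $e$, the inner sum is over the edges $g$ of the path $\gamma_{xy}$, and $g_1,g_2$ denote the endpoints of $g$.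
   Context: For a finite simple undirected graph $G$ with vertex set $V_G$, let $\mathcal{H}_G$ be the complex Hilbert space with orthonormal basis $\{|x\rangle : x\in V_G\}$. The graph Laplacian is $L_G=\sum_{x} d_x |x\rangle\langle x| - \sum_{x\sim y}|x\rangle\langle y|$, where $d_x$ is the degree of $x$ and the second sum runs over ordered pairs of adjacent vertices. For a potential $W:V_G\to\mathbb{R}$, $H_{G,W}=L_G+\sum_{x} W(x)|x\rangle\langle x|$. For connected $G$ the ground state is nondegenerate and can be chosen with strictly positive amplitudes (Perron–Frobenius). *)

theory Defs
  imports Complex_Main
begin

definition simple_graph :: "'a set \<Rightarrow> ('a \<Rightarrow> 'a \<Rightarrow> bool) \<Rightarrow> bool" where
  "simple_graph V E \<longleftrightarrow> finite V \<and> (\<forall>x y. E x y \<longrightarrow> x \<in> V \<and> y \<in> V)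
     \<and> (\<forall>x y. E x y \<longrightarrow> E y x) \<and> (\<forall>x. \<not> E x x)"

definition is_walk :: "('a \<Rightarrow> 'a \<Rightarrow> bool) \<Rightarrow> 'a list \<Rightarrow> bool" where
  "is_walk E p \<longleftrightarrow> p \<noteq> [] \<and> (\<forall>i. Suc i < length p \<longrightarrow> E (p ! i) (p ! Suc i))"

definition graph_connected :: "'a set \<Rightarrow> ('a \<Rightarrow> 'a \<Rightarrow> bool) \<Rightarrow> bool" where
  "graph_connected V E \<longleftrightarrow> (\<forall>x\<in>V. \<forall>y\<in>V. \<exists>p. is_walk E p \<and> hd p = x \<and> last p = y)"

definition walk_edges :: "'a list \<Rightarrow> 'a set list" where
  "walk_edges p = map (\<lambda>(a, b). {a, b}) (zip p (tl p))"

definition edge_simple_path :: "('a \<Rightarrow> 'a \<Rightarrow> bool) \<Rightarrow> 'a \<Rightarrow> 'a \<Rightarrow> 'a list \<Rightarrow> bool" where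
  "edge_simple_path E x y p \<longleftrightarrow> is_walk E p \<and> hd p = x \<and> last p = y \<and> distinct (walk_edges p)"

definition graph_edges :: "('a \<Rightarrow> 'a \<Rightarrow> bool) \<Rightarrow> 'a set set" where
  "graph_edges E = {{u, v} | u v. E u v}"

definition degree :: "'a set \<Rightarrow> ('a \<Rightarrow> 'a \<Rightarrow> bool) \<Rightarrow> 'a \<Rightarrow> nat" where
  "degree V E x = card {y \<in> V. E x y}"

text \<open>Action of H_{G,W} = L_G + W on a vector f : V -> complex (coordinates w.r.t. |x>).\<close>
definition Hop :: "'a set \<Rightarrow> ('a \<Rightarrow> 'a \<Rightarrow> bool) \<Rightarrow> ('a \<Rightarrow> real) \<Rightarrow> ('a \<Rightarrow> complex) \<Rightarrow> 'a \<Rightarrow> complex" where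
  "Hop V E W f x = of_nat (degree V E x) * f x - (\<Sum>y\<in>{y \<in> V. E x y}. f y) + of_real (W x) * f x"

text \<open>Eigenvalues of H_{G,W} acting on the complex Hilbert space with basis indexed by V
(all eigenvalues are real since H is Hermitian).\<close>
definition eigenvalues :: "'a set \<Rightarrow> ('a \<Rightarrow> 'a \<Rightarrow> bool) \<Rightarrow> ('a \<Rightarrow> real) \<Rightarrow> real set" where
  "eigenvalues V E W = {lam. \<exists>f. (\<exists>x\<in>V. f x \<noteq> 0) \<and> (\<forall>x\<in>V. Hop V E W f x = of_real lam * f x)}"

definition ground_energy :: "'a set \<Rightarrow> ('a \<Rightarrow> 'a \<Rightarrow> bool) \<Rightarrow> ('a \<Rightarrow> real) \<Rightarrow> real" where
  "ground_energy V E W = Min (eigenvalues V E W)"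

text \<open>Since the ground state is
nondegenerate, the second-smallest eigenvalue (with multiplicity) is the smallest
eigenvalue different from the ground energy.\<close>
definition spectral_gap :: "'a set \<Rightarrow> ('a \<Rightarrow> 'a \<Rightarrow> bool) \<Rightarrow> ('a \<Rightarrow> real) \<Rightarrow> real" where
  "spectral_gap V E W = Min (eigenvalues V E W - {ground_energy V E W}) - ground_energy V E W"

definition kappa' :: "'a set \<Rightarrow> ('a \<Rightarrow> 'a \<Rightarrow> bool) \<Rightarrow> ('a \<Rightarrow> real) \<Rightarrow> ('a \<Rightarrow> 'a \<Rightarrow> 'a list) \<Rightarrow> real" where
  "kappa' V E \<psi> \<Gamma> = Max ((\<lambda>e. \<Sum>(x, y)\<in>{(x, y). x \<in> V \<and> y \<in> V \<and> x \<noteq> y \<and> e \<in> set (walk_edges (\<Gamma> x y))}.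
        \<psi> x ^ 2 * \<psi> y ^ 2 *
        sum_list (map (\<lambda>(a, b). 1 / (\<psi> a * \<psi> b)) (zip (\<Gamma> x y) (tl (\<Gamma> x y))))) ` graph_edges E)"

end

theory Submission
  imports Defs "Jordan_Normal_Form.Spectral_Radius"
begin


lemma Hop_alt:
  assumes "finite V"
  shows "Hop V E W f x = (of_nat (Defs.degree V E x) + of_real (W x)) * f x - (\<Sum>y\<in>V. if E x y then f y else 0)"
  unfolding Hop_def using assms by (simp add: sum.inter_filter algebra_simps)

lemma Hop_sym:
  assumes sg: "simple_graph V E"
  shows "(\<Sum>x\<in>V. u x * Hop V E W f x) = (\<Sum>x\<in>V. Hop V E W u x * f x)"
proof -
  have fin: "finite V" using sg by (simp add: simple_graph_def)
  have sym: "\<And>x y. E x y = E y x" using sg unfolding simple_graph_def by blast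
  have "(\<Sum>x\<in>V. u x * (\<Sum>y\<in>V. if E x y then f y else 0)) = (\<Sum>x\<in>V. \<Sum>y\<in>V. if E x y then u x * f y else 0)"
    by (simp add: sum_distrib_left if_distrib cong: if_cong)
  also have "\<dots> = (\<Sum>y\<in>V. \<Sum>x\<in>V. if E x y then u x * f y else 0)" by (rule sum.swap)
  also have "\<dots> = (\<Sum>y\<in>V. (\<Sum>x\<in>V. if E y x then u x else 0) * f y)"
    by (simp add: sum_distrib_right sym)
       (intro sum.cong refl, auto)
  finally have e: "(\<Sum>x\<in>V. u x * (\<Sum>y\<in>V. if E x y then f y else 0)) = (\<Sum>y\<in>V. (\<Sum>x\<in>V. if E y x then u x else 0) * f y)" .
  show ?thesis
    unfolding Hop_alt[OF fin]
    using e by (simp add: algebra_simps sum_subtractf sum.distrib)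
qed

lemma amgm4: fixes X Y :: real shows "4*X*Y \<le> (X+Y)^2"
proof -
  have "(X+Y)^2 - 4*X*Y = (X-Y)^2" by (simp add: power2_eq_square algebra_simps)
  thus ?thesis by (metis diff_ge_0_iff_ge zero_le_power2)
qed
lemma cs2: fixes w s t L C :: real
  assumes "w > 0" "s \<ge> 0" "t \<ge> 0" "L \<ge> 0" "C \<ge> 0" "t^2 \<le> L * C"
  shows "(s + t)^2 \<le> (1/w + L) * (w * s^2 + C)"
proof -
  have a: "(2*s*t)^2 \<le> (C/w + L*w*s^2)^2"
  proof -
    have "(2*s*t)^2 = 4*s^2*t^2" by (simp add: power_mult_distrib)
    also have "\<dots> \<le> 4*s^2*(L*C)" using assms(6) by (intro mult_left_mono) auto
    also have "4*s^2*(L*C) = 4*(C/w)*(L*w*s^2)" using assms(1) by simp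
    also have "\<dots> \<le> (C/w + L*w*s^2)^2" by (rule amgm4)
    finally show ?thesis .
  qed
  have b: "2*s*t \<le> C/w + L*w*s^2"
  proof (rule power2_le_imp_le[OF a])
    show "0 \<le> C/w + L*w*s^2" using assms by simp
  qed
  have "(1/w + L) * (w * s^2 + C) = s^2 + C/w + L*w*s^2 + L*C" using assms(1) by (simp add: algebra_simps)
  moreover have "(s+t)^2 = s^2 + 2*s*t + t^2" by (simp add: power2_sum)
  ultimately show ?thesis using b assms(6) by linarith
qed

lemma walk_edge:
  assumes "is_walk E p" "(a, b) \<in> set (zip p (tl p))" shows "E a b"
proof -
  from assms(2) obtain i where i: "i < length (zip p (tl p))" "zip p (tl p) ! i = (a, b)"
    by (auto simp: in_set_conv_nth)
  hence "a = p ! i" "b = p ! Suc i" "Suc i < length p" by (auto simp: nth_tl)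
  thus ?thesis using assms(1) unfolding is_walk_def by auto
qed

definition dq :: "('a \<Rightarrow> real) \<Rightarrow> ('a \<Rightarrow> complex) \<Rightarrow> 'a \<Rightarrow> 'a \<Rightarrow> real" where
  "dq \<psi> f a b = cmod (f a / of_real (\<psi> a) - f b / of_real (\<psi> b))"

definition gq :: "('a \<Rightarrow> real) \<Rightarrow> ('a \<Rightarrow> complex) \<Rightarrow> 'a \<Rightarrow> complex" where
  "gq \<psi> f x = f x / of_real (\<psi> x)"

locale gsctx =
  fixes V :: "'a set" and E :: "'a \<Rightarrow> 'a \<Rightarrow> bool" and W :: "'a \<Rightarrow> real"
    and \<psi> :: "'a \<Rightarrow> real" and c :: real
  assumes sg: "simple_graph V E" and pos: "\<forall>x\<in>V. \<psi> x > 0"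
    and gs: "\<forall>x\<in>V. Hop V E W (\<lambda>v. of_real (\<psi> v)) x = of_real c * of_real (\<psi> x)"

context gsctx
begin

lemma fin: "finite V" using sg by (simp add: simple_graph_def)
lemma symE: "E x y = E y x" using sg unfolding simple_graph_def by blast
lemma EV: "E x y \<Longrightarrow> x \<in> V \<and> y \<in> V" using sg unfolding simple_graph_def by blast
lemma irr: "\<not> E x x" using sg unfolding simple_graph_def by blast

lemma gq_mult: "x \<in> V \<Longrightarrow> of_real (\<psi> x) * gq \<psi> f x = f x"
  using pos unfolding gq_def by force

lemma shift:
  assumes x: "x \<in> V"
  shows "Hop V E W f x - of_real c * f x = (\<Sum>y\<in>V. if E x y then of_real (\<psi> y) * (gq \<psi> f x - gq \<psi> f y) else 0)"
proof -
  define d where "d = (of_nat (Defs.degree V E x) + of_real (W x) :: complex)"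
  define S where "S = (\<Sum>y\<in>V. if E x y then (of_real (\<psi> y) :: complex) else 0)"
  have "d * of_real (\<psi> x) - S = of_real c * of_real (\<psi> x)"
    using gs x unfolding d_def S_def Hop_alt[OF fin] by simp
  hence h1: "S = (d - of_real c) * of_real (\<psi> x)" by (simp add: algebra_simps)
  have px: "(of_real (\<psi> x) :: complex) \<noteq> 0" using pos x by force
  have "(\<Sum>y\<in>V. if E x y then of_real (\<psi> y) * (gq \<psi> f x - gq \<psi> f y) else 0)
      = (\<Sum>y\<in>V. (if E x y then of_real (\<psi> y) else 0) * gq \<psi> f x - (if E x y then f y else 0))"
    by (intro sum.cong refl) (auto simp: algebra_simps gq_mult dest: EV)
  also have "\<dots> = S * gq \<psi> f x - (\<Sum>y\<in>V. if E x y then f y else 0)"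
    unfolding S_def by (simp add: sum_subtractf sum_distrib_right)
  also have "S * gq \<psi> f x = (d - of_real c) * f x"
    unfolding h1 using px by (simp add: gq_def)
  finally show ?thesis unfolding Hop_alt[OF fin] d_def by (simp add: algebra_simps)
qed

definition DD :: "('a \<Rightarrow> complex) \<Rightarrow> real" where
  "DD f = (\<Sum>x\<in>V. \<Sum>y\<in>V. if E x y then \<psi> x * \<psi> y * (dq \<psi> f x y)\<^sup>2 else 0)"

lemma qform:
  "(\<Sum>x\<in>V. cnj (f x) * (Hop V E W f x - of_real c * f x)) = of_real (DD f / 2)"
proof -
  define g where "g = gq \<psi> f"
  define T where "T = (\<lambda>x y. if E x y then of_real (\<psi> x * \<psi> y) * (cnj (g x) * (g x - g y)) else (0::complex))"
  have cf: "cnj (f x) = of_real (\<psi> x) * cnj (g x)" if "x \<in> V" for x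
    using gq_mult[OF that, of f] unfolding g_def by (metis complex_cnj_complex_of_real complex_cnj_mult)
  have 1: "(\<Sum>x\<in>V. cnj (f x) * (Hop V E W f x - of_real c * f x)) = (\<Sum>x\<in>V. \<Sum>y\<in>V. T x y)"
  proof (intro sum.cong refl)
    fix x assume x: "x \<in> V"
    show "cnj (f x) * (Hop V E W f x - of_real c * f x) = (\<Sum>y\<in>V. T x y)"
      unfolding shift[OF x] cf[OF x] sum_distrib_left T_def g_def
      by (intro sum.cong refl) (simp add: algebra_simps)
  qed
  have 2: "(\<Sum>x\<in>V. \<Sum>y\<in>V. T x y) = (\<Sum>x\<in>V. \<Sum>y\<in>V. T y x)" by (rule sum.swap)
  have 3: "T x y + T y x = of_real (if E x y then \<psi> x * \<psi> y * (dq \<psi> f x y)\<^sup>2 else 0)" for x y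
  proof (cases "E x y")
    case True
    have "T x y + T y x = of_real (\<psi> x * \<psi> y) * ((g x - g y) * cnj (g x - g y))"
      using True symE[of x y] unfolding T_def by (simp add: algebra_simps)
    also have "(g x - g y) * cnj (g x - g y) = of_real ((dq \<psi> f x y)\<^sup>2)"
      unfolding complex_norm_square[symmetric] dq_def g_def gq_def ..
    finally show ?thesis using True by simp
  next
    case False thus ?thesis using symE[of x y] unfolding T_def by simp
  qed
  have "2 * (\<Sum>x\<in>V. cnj (f x) * (Hop V E W f x - of_real c * f x)) = (\<Sum>x\<in>V. \<Sum>y\<in>V. T x y + T y x)"
    unfolding 1 mult_2 by (subst (2) 2) (simp add: sum.distrib)
  also have "\<dots> = of_real (DD f)" unfolding 3 DD_def by simp
  finally show ?thesis by (simp add: field_simps)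
qed

lemma DD_nonneg: "DD f \<ge> 0"
  unfolding DD_def using pos by (intro sum_nonneg) (simp add: less_imp_le)

definition NN :: "('a \<Rightarrow> complex) \<Rightarrow> real" where
  "NN f = (\<Sum>x\<in>V. (cmod (f x))\<^sup>2)"

lemma variance:
  assumes norm1: "(\<Sum>x\<in>V. \<psi> x ^ 2) = 1"
    and orth: "(\<Sum>x\<in>V. of_real (\<psi> x) * f x) = 0"
  shows "(\<Sum>x\<in>V. \<Sum>y\<in>V. \<psi> x ^ 2 * \<psi> y ^ 2 * (dq \<psi> f x y)\<^sup>2) = 2 * NN f"
proof -
  define a where "a = (\<lambda>x. of_real (\<psi> x) * f x)"
  define b where "b = (\<lambda>x. (of_real (\<psi> x ^ 2) :: complex))"
  define m where "m = (\<lambda>x. f x * cnj (f x))"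
  have t: "of_real (\<psi> x ^ 2 * \<psi> y ^ 2 * (dq \<psi> f x y)\<^sup>2)
      = b y * m x + b x * m y - a x * cnj (a y) - a y * cnj (a x)" if "x \<in> V" "y \<in> V" for x y
  proof -
    have px: "(of_real (\<psi> x) :: complex) \<noteq> 0" "(of_real (\<psi> y) :: complex) \<noteq> 0" using pos that by force+
    have "of_real ((dq \<psi> f x y)\<^sup>2) = (f x / of_real (\<psi> x) - f y / of_real (\<psi> y)) * cnj (f x / of_real (\<psi> x) - f y / of_real (\<psi> y))"
      unfolding complex_norm_square dq_def ..
    hence "of_real (\<psi> x ^ 2 * \<psi> y ^ 2 * (dq \<psi> f x y)\<^sup>2) = of_real (\<psi> x ^ 2 * \<psi> y ^ 2) * ((f x / of_real (\<psi> x) - f y / of_real (\<psi> y)) * cnj (f x / of_real (\<psi> x) - f y / of_real (\<psi> y)))"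
      by (metis of_real_mult)
    also have "\<dots> = b y * m x + b x * m y - a x * cnj (a y) - a y * cnj (a x)"
    proof -
      define u where "u = (of_real (\<psi> x) :: complex)"
      define v where "v = (of_real (\<psi> y) :: complex)"
      have u: "u \<noteq> 0" "cnj u = u" and v: "v \<noteq> 0" "cnj v = v" using px unfolding u_def v_def by auto
      have e1: "X / u - Y / v = (v * X - u * Y) / (u * v)" for X Y using u v by (simp add: field_simps)
      have e2: "cnj ((v * f x - u * f y) / (u * v)) = (v * cnj (f x) - u * cnj (f y)) / (u * v)"
        using u v by simp
      have "of_real (\<psi> x ^ 2 * \<psi> y ^ 2) * ((f x / u - f y / v) * cnj (f x / u - f y / v))
          = ((u*v) * (u*v)) * (((v * f x - u * f y) / (u * v)) * ((v * cnj (f x) - u * cnj (f y)) / (u * v)))"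
      proof -
        have ps: "(of_real (\<psi> x ^ 2 * \<psi> y ^ 2) :: complex) = (u*v)*(u*v)" unfolding u_def v_def by (simp add: power2_eq_square)
        show ?thesis by (simp only: ps e1 e2)
      qed
      also have "\<dots> = (v * f x - u * f y) * (v * cnj (f x) - u * cnj (f y))"
        using u v by simp
      also have "\<dots> = b y * m x + b x * m y - a x * cnj (a y) - a y * cnj (a x)"
        unfolding a_def b_def m_def u_def v_def by (simp add: algebra_simps power2_eq_square)
      finally show ?thesis unfolding u_def v_def .
    qed
    finally show ?thesis .
  qed
  have "of_real (\<Sum>x\<in>V. \<Sum>y\<in>V. \<psi> x ^ 2 * \<psi> y ^ 2 * (dq \<psi> f x y)\<^sup>2)
      = (\<Sum>x\<in>V. \<Sum>y\<in>V. b y * m x + b x * m y - a x * cnj (a y) - a y * cnj (a x))"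
    using t by (simp add: of_real_sum)
  also have "\<dots> = (\<Sum>x\<in>V. \<Sum>y\<in>V. b y * m x) + (\<Sum>x\<in>V. \<Sum>y\<in>V. b x * m y)
     - (\<Sum>x\<in>V. \<Sum>y\<in>V. a x * cnj (a y)) - (\<Sum>x\<in>V. \<Sum>y\<in>V. a y * cnj (a x))"
    by (simp add: sum.distrib sum_subtractf)
  also have "(\<Sum>x\<in>V. \<Sum>y\<in>V. a x * cnj (a y)) = (\<Sum>x\<in>V. a x) * cnj (\<Sum>y\<in>V. a y)"
    by (simp add: sum_product)
  also have "(\<Sum>x\<in>V. \<Sum>y\<in>V. a y * cnj (a x)) = (\<Sum>y\<in>V. a y) * cnj (\<Sum>x\<in>V. a x)"
    by (subst sum.swap) (simp add: sum_product)
  also have "(\<Sum>x\<in>V. a x) = 0" using orth unfolding a_def .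
  also have "(\<Sum>x\<in>V. \<Sum>y\<in>V. b y * m x) = (\<Sum>x\<in>V. m x) * (\<Sum>y\<in>V. b y)"
    unfolding sum_product by (rule sum.cong[OF refl], rule sum.cong[OF refl], rule mult.commute)
  also have "(\<Sum>x\<in>V. \<Sum>y\<in>V. b x * m y) = (\<Sum>x\<in>V. m x) * (\<Sum>y\<in>V. b y)"
    unfolding sum_product by (subst sum.swap) (rule sum.cong[OF refl], rule sum.cong[OF refl], rule mult.commute)
  also have "(\<Sum>y\<in>V. b y) = 1" unfolding b_def using norm1 by (metis of_real_1 of_real_sum)
  also have "(\<Sum>x\<in>V. m x) = of_real (NN f)" unfolding m_def NN_def
    by (simp only: of_real_sum complex_norm_square)
  finally have "of_real (\<Sum>x\<in>V. \<Sum>y\<in>V. \<psi> x ^ 2 * \<psi> y ^ 2 * (dq \<psi> f x y)\<^sup>2) = (of_real (2 * NN f) :: complex)"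
    by simp
  thus ?thesis using of_real_eq_iff by blast
qed

definition Lp :: "'a list \<Rightarrow> real" where
  "Lp p = sum_list (map (\<lambda>(a, b). 1 / (\<psi> a * \<psi> b)) (zip p (tl p)))"

definition Cp :: "('a \<Rightarrow> complex) \<Rightarrow> 'a list \<Rightarrow> real" where
  "Cp f p = sum_list (map (\<lambda>(a, b). \<psi> a * \<psi> b * (dq \<psi> f a b)\<^sup>2) (zip p (tl p)))"

lemma dq_nonneg: "dq \<psi> f a b \<ge> 0" unfolding dq_def by simp

lemma dq_tri: "dq \<psi> f a b \<le> dq \<psi> f a m + dq \<psi> f m b"
  unfolding dq_def by (metis diff_add_cancel add_diff_eq norm_triangle_ineq add.commute)

lemma zip_tl_in: "(a, b) \<in> set (zip p (tl p)) \<Longrightarrow> a \<in> set p \<and> b \<in> set p"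
  by (cases p) (auto dest: set_zip_leftD set_zip_rightD)

lemma Lp_Cp_nonneg: assumes "set p \<subseteq> V" shows "Lp p \<ge> 0 \<and> Cp f p \<ge> 0"
proof -
  have "\<psi> a > 0 \<and> \<psi> b > 0" if "(a, b) \<in> set (zip p (tl p))" for a b
    using zip_tl_in[OF that] assms pos by auto
  thus ?thesis unfolding Lp_def Cp_def
    by (intro conjI sum_list_nonneg) (auto simp: less_imp_le)
qed

lemma path_cs:
  "p \<noteq> [] \<Longrightarrow> set p \<subseteq> V \<Longrightarrow> (dq \<psi> f (hd p) (last p))\<^sup>2 \<le> Lp p * Cp f p"
proof (induction p)
  case Nil thus ?case by simp
next
  case (Cons a q)
  show ?case
  proof (cases q)
    case Nil thus ?thesis by (simp add: dq_def Lp_def Cp_def)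
  next
    case (Cons b r)
    have IH: "(dq \<psi> f b (last q))\<^sup>2 \<le> Lp q * Cp f q"
      using Cons.IH Cons.prems \<open>q = b # r\<close> by auto
    have ab: "a \<in> V" "b \<in> V" "set q \<subseteq> V" using Cons.prems \<open>q = b # r\<close> by auto
    have w: "\<psi> a * \<psi> b > 0" using pos ab by simp
    have L: "Lp (a # q) = 1 / (\<psi> a * \<psi> b) + Lp q" and C: "Cp f (a # q) = \<psi> a * \<psi> b * (dq \<psi> f a b)\<^sup>2 + Cp f q"
      unfolding Lp_def Cp_def \<open>q = b # r\<close> by simp_all
    have "dq \<psi> f a (last q) \<le> dq \<psi> f a b + dq \<psi> f b (last q)" by (rule dq_tri)
    hence "(dq \<psi> f a (last q))\<^sup>2 \<le> (dq \<psi> f a b + dq \<psi> f b (last q))\<^sup>2"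
      using dq_nonneg by (intro power_mono) auto
    also have "\<dots> \<le> (1 / (\<psi> a * \<psi> b) + Lp q) * (\<psi> a * \<psi> b * (dq \<psi> f a b)\<^sup>2 + Cp f q)"
      by (rule cs2[OF w dq_nonneg dq_nonneg _ _ IH]) (use Lp_Cp_nonneg[OF ab(3)] in auto)
    finally show ?thesis unfolding L C using \<open>q = b # r\<close> by simp
  qed
qed

definition phi :: "('a \<Rightarrow> complex) \<Rightarrow> 'a set \<Rightarrow> real" where
  "phi f e = (\<Sum>z\<in>{(a, b). a \<in> V \<and> b \<in> V \<and> E a b \<and> {a, b} = e}. case z of (a, b) \<Rightarrow> \<psi> a * \<psi> b * (dq \<psi> f a b)\<^sup>2) / 2"

lemma dq_sym: "dq \<psi> f a b = dq \<psi> f b a" unfolding dq_def by (simp add: norm_minus_commute)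

lemma phi_edge: assumes "E a b" shows "phi f {a, b} = \<psi> a * \<psi> b * (dq \<psi> f a b)\<^sup>2"
proof -
  have ne: "a \<noteq> b" using assms irr by auto
  have "{(x, y). x \<in> V \<and> y \<in> V \<and> E x y \<and> {x, y} = {a, b}} = {(a, b), (b, a)}"
    using assms EV symE[of a b] by (auto simp: doubleton_eq_iff)
  thus ?thesis unfolding phi_def using ne dq_sym[of _ a b] by simp
qed

lemma phi_nonneg: "phi f e \<ge> 0"
  unfolding phi_def using pos by (intro divide_nonneg_pos sum_nonneg) (auto simp: less_imp_le)

lemma DD_edges: "DD f = 2 * (\<Sum>e\<in>graph_edges E. phi f e)"
proof -
  define P where "P = {(a, b). a \<in> V \<and> b \<in> V \<and> E a b}"
  define h where "h = (\<lambda>z. case z of (a, b) \<Rightarrow> \<psi> a * \<psi> b * (dq \<psi> f a b)\<^sup>2)"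
  have finP: "finite P" unfolding P_def by (rule finite_subset[of _ "V \<times> V"]) (auto simp: fin)
  have "DD f = (\<Sum>z\<in>V \<times> V. if E (fst z) (snd z) then h z else 0)"
    unfolding DD_def h_def sum.cartesian_product by (intro sum.cong refl) auto
  also have "\<dots> = sum h P" unfolding P_def using fin
    by (simp add: sum.inter_filter[symmetric]) (intro sum.cong refl, auto)
  also have "\<dots> = (\<Sum>e\<in>(\<lambda>(a, b). {a, b}) ` P. sum h {z \<in> P. (\<lambda>(a, b). {a, b}) z = e})"
    by (rule sum.image_gen[OF finP])
  also have "(\<lambda>(a, b). {a, b}) ` P = graph_edges E"
    unfolding P_def graph_edges_def using EV by auto
  also have "(\<Sum>e\<in>graph_edges E. sum h {z \<in> P. (\<lambda>(a, b). {a, b}) z = e}) = (\<Sum>e\<in>graph_edges E. 2 * phi f e)"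
    unfolding phi_def P_def h_def by (intro sum.cong refl) (auto intro!: arg_cong[where f = "sum _"])
  finally show ?thesis by (simp add: sum_distrib_left)
qed

lemma Cp_edges:
  assumes "is_walk E p" "distinct (walk_edges p)"
  shows "Cp f p = (\<Sum>e\<in>set (walk_edges p). phi f e)"
proof -
  have "Cp f p = sum_list (map (phi f) (walk_edges p))"
    unfolding Cp_def walk_edges_def map_map
    by (intro arg_cong[where f = sum_list] map_cong refl) (auto simp: phi_edge walk_edge[OF assms(1)])
  thus ?thesis using assms(2) by (simp add: sum_list_distinct_conv_sum_set)
qed

lemma walk_edges_sub: "is_walk E p \<Longrightarrow> set (walk_edges p) \<subseteq> graph_edges E"
  unfolding walk_edges_def graph_edges_def by (auto dest: walk_edge)

lemma walk_in_V:
  assumes w: "is_walk E p" and h: "hd p \<in> V" shows "set p \<subseteq> V"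
proof
  fix v assume "v \<in> set p"
  then obtain i where i: "i < length p" "v = p ! i" by (auto simp: in_set_conv_nth)
  show "v \<in> V"
  proof (cases "Suc i < length p")
    case True thus ?thesis using w i EV unfolding is_walk_def by blast
  next
    case False
    show ?thesis
    proof (cases i)
      case 0 thus ?thesis using h i w by (simp add: hd_conv_nth is_walk_def)
    next
      case (Suc j)
      hence "E (p ! j) (p ! Suc j)" using w i unfolding is_walk_def by auto
      thus ?thesis using EV i Suc by blast
    qed
  qed
qed

lemma finGE: "finite (graph_edges E)"
proof -
  have "graph_edges E \<subseteq> (\<lambda>(a, b). {a, b}) ` (V \<times> V)" unfolding graph_edges_def using EV by auto
  thus ?thesis using fin by (meson finite_SigmaI finite_imageI finite_subset)
qed

lemma core:
  assumes norm1: "(\<Sum>x\<in>V. \<psi> x ^ 2) = 1"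
    and paths: "\<forall>x\<in>V. \<forall>y\<in>V. x \<noteq> y \<longrightarrow> edge_simple_path E x y (\<Gamma> x y)"
    and orth: "(\<Sum>x\<in>V. of_real (\<psi> x) * f x) = 0"
  shows "4 * NN f \<le> kappa' V E \<psi> \<Gamma> * DD f"
proof -
  define P2 where "P2 = {(x, y). x \<in> V \<and> y \<in> V \<and> x \<noteq> y}"
  define GE where "GE = graph_edges E"
  define K where "K = (\<lambda>e. \<Sum>(x, y)\<in>{(x, y). x \<in> V \<and> y \<in> V \<and> x \<noteq> y \<and> e \<in> set (walk_edges (\<Gamma> x y))}.
        \<psi> x ^ 2 * \<psi> y ^ 2 * Lp (\<Gamma> x y))"
  have kap: "kappa' V E \<psi> \<Gamma> = Max (K ` GE)" unfolding kappa'_def K_def GE_def Lp_def ..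
  have finP2: "finite P2" unfolding P2_def by (rule finite_subset[of _ "V \<times> V"]) (auto simp: fin)
  have pw: "is_walk E (\<Gamma> x y)" "hd (\<Gamma> x y) = x" "last (\<Gamma> x y) = y" "distinct (walk_edges (\<Gamma> x y))"
    "set (\<Gamma> x y) \<subseteq> V" "\<Gamma> x y \<noteq> []"
    if "(x, y) \<in> P2" for x y
  proof -
    have esp: "edge_simple_path E x y (\<Gamma> x y)" using paths that unfolding P2_def by auto
    thus "is_walk E (\<Gamma> x y)" "hd (\<Gamma> x y) = x" "last (\<Gamma> x y) = y" "distinct (walk_edges (\<Gamma> x y))"
      unfolding edge_simple_path_def by auto
    thus "set (\<Gamma> x y) \<subseteq> V" "\<Gamma> x y \<noteq> []" using walk_in_V that unfolding P2_def is_walk_def by auto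
  qed
  have "2 * NN f = (\<Sum>x\<in>V. \<Sum>y\<in>V. \<psi> x ^ 2 * \<psi> y ^ 2 * (dq \<psi> f x y)\<^sup>2)"
    using variance[OF norm1 orth] by simp
  also have "\<dots> = (\<Sum>(x, y)\<in>V \<times> V. \<psi> x ^ 2 * \<psi> y ^ 2 * (dq \<psi> f x y)\<^sup>2)"
    by (simp add: sum.cartesian_product)
  also have "\<dots> = (\<Sum>(x, y)\<in>V \<times> V. if x \<noteq> y then \<psi> x ^ 2 * \<psi> y ^ 2 * (dq \<psi> f x y)\<^sup>2 else 0)"
    by (intro sum.cong refl) (auto simp: dq_def)
  also have "\<dots> = (\<Sum>(x, y)\<in>P2. \<psi> x ^ 2 * \<psi> y ^ 2 * (dq \<psi> f x y)\<^sup>2)"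
    unfolding P2_def using fin
    by (simp add: sum.inter_filter[symmetric] case_prod_unfold) (intro sum.cong, auto)
  also have "\<dots> \<le> (\<Sum>(x, y)\<in>P2. \<psi> x ^ 2 * \<psi> y ^ 2 * (Lp (\<Gamma> x y) * Cp f (\<Gamma> x y)))"
  proof (rule sum_mono, clarify)
    fix x y assume xy: "(x, y) \<in> P2"
    show "\<psi> x ^ 2 * \<psi> y ^ 2 * (dq \<psi> f x y)\<^sup>2 \<le> \<psi> x ^ 2 * \<psi> y ^ 2 * (Lp (\<Gamma> x y) * Cp f (\<Gamma> x y))"
      using path_cs[OF pw(6)[OF xy] pw(5)[OF xy], of f] pw(2,3)[OF xy]
      by (intro mult_left_mono) auto
  qed
  also have "\<dots> = (\<Sum>(x, y)\<in>P2. \<Sum>e\<in>GE. if e \<in> set (walk_edges (\<Gamma> x y)) then \<psi> x ^ 2 * \<psi> y ^ 2 * Lp (\<Gamma> x y) * phi f e else 0)"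
  proof (intro sum.cong refl, clarify)
    fix x y assume xy: "(x, y) \<in> P2"
    have "Cp f (\<Gamma> x y) = (\<Sum>e\<in>set (walk_edges (\<Gamma> x y)). phi f e)" by (rule Cp_edges[OF pw(1,4)[OF xy]])
    also have "\<dots> = (\<Sum>e\<in>GE. if e \<in> set (walk_edges (\<Gamma> x y)) then phi f e else 0)"
      unfolding GE_def using walk_edges_sub[OF pw(1)[OF xy]] finGE
      by (simp add: sum.inter_filter[symmetric]) (intro sum.cong, auto)
    finally show "\<psi> x ^ 2 * \<psi> y ^ 2 * (Lp (\<Gamma> x y) * Cp f (\<Gamma> x y)) = (\<Sum>e\<in>GE. if e \<in> set (walk_edges (\<Gamma> x y)) then \<psi> x ^ 2 * \<psi> y ^ 2 * Lp (\<Gamma> x y) * phi f e else 0)"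
      by (simp add: sum_distrib_left if_distrib mult.assoc cong: if_cong)
  qed
  also have "\<dots> = (\<Sum>e\<in>GE. \<Sum>(x, y)\<in>P2. if e \<in> set (walk_edges (\<Gamma> x y)) then \<psi> x ^ 2 * \<psi> y ^ 2 * Lp (\<Gamma> x y) * phi f e else 0)"
    unfolding case_prod_unfold by (rule sum.swap)
  also have "\<dots> = (\<Sum>e\<in>GE. K e * phi f e)"
  proof (intro sum.cong refl)
    fix e
    have "{(x, y). x \<in> V \<and> y \<in> V \<and> x \<noteq> y \<and> e \<in> set (walk_edges (\<Gamma> x y))} = {z \<in> P2. e \<in> set (walk_edges (\<Gamma> (fst z) (snd z)))}"
      unfolding P2_def by auto
    thus "(\<Sum>(x, y)\<in>P2. if e \<in> set (walk_edges (\<Gamma> x y)) then \<psi> x ^ 2 * \<psi> y ^ 2 * Lp (\<Gamma> x y) * phi f e else 0) = K e * phi f e"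
      unfolding K_def using finP2 by (simp add: sum.inter_filter[symmetric] case_prod_unfold sum_distrib_right)
  qed
  also have "\<dots> \<le> (\<Sum>e\<in>GE. kappa' V E \<psi> \<Gamma> * phi f e)"
  proof (rule sum_mono)
    fix e assume e: "e \<in> GE"
    have "K e \<le> kappa' V E \<psi> \<Gamma>" unfolding kap using e finGE unfolding GE_def by (intro Max_ge) auto
    thus "K e * phi f e \<le> kappa' V E \<psi> \<Gamma> * phi f e" using phi_nonneg by (rule mult_right_mono)
  qed
  also have "\<dots> = kappa' V E \<psi> \<Gamma> * (\<Sum>e\<in>GE. phi f e)" by (rule sum_distrib_left[symmetric])
  also have "\<dots> = kappa' V E \<psi> \<Gamma> * DD f / 2" unfolding DD_edges GE_def by simp
  finally show ?thesis by simp
qed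

end




context gsctx begin

lemma Hop_cong: assumes "\<forall>x\<in>V. f x = g x" "x \<in> V"
  shows "Hop V E W f x = Hop V E W g x"
  unfolding Hop_def using assms by (auto intro!: sum.cong)

lemma Hop_lin: assumes "finite K"
  shows "Hop V E W (\<lambda>x. \<Sum>k\<in>K. a k * F k x) y = (\<Sum>k\<in>K. a k * Hop V E W (F k) y)"
proof -
  have "(\<Sum>z\<in>{z \<in> V. E y z}. \<Sum>k\<in>K. a k * F k z) = (\<Sum>k\<in>K. a k * (\<Sum>z\<in>{z \<in> V. E y z}. F k z))"
    by (subst sum.swap) (simp add: sum_distrib_left)
  moreover have "of_nat (Defs.degree V E y) * (\<Sum>k\<in>K. a k * F k y) = (\<Sum>k\<in>K. a k * (of_nat (Defs.degree V E y) * F k y))"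
    by (simp add: sum_distrib_left mult.left_commute)
  moreover have "of_real (W y) * (\<Sum>k\<in>K. a k * F k y) = (\<Sum>k\<in>K. a k * (of_real (W y) * F k y))"
    by (simp add: sum_distrib_left mult.left_commute)
  moreover have "(\<Sum>k\<in>K. a k * (of_nat (Defs.degree V E y) * F k y - (\<Sum>z\<in>{z \<in> V. E y z}. F k z) + of_real (W y) * F k y))
     = (\<Sum>k\<in>K. a k * (of_nat (Defs.degree V E y) * F k y)) - (\<Sum>k\<in>K. a k * (\<Sum>z\<in>{z \<in> V. E y z}. F k z)) + (\<Sum>k\<in>K. a k * (of_real (W y) * F k y))"
    by (simp add: distrib_left right_diff_distrib sum.distrib sum_subtractf)
  ultimately show ?thesis unfolding Hop_def by simp
qed

lemma orth_of_eig:
  assumes "\<forall>x\<in>V. Hop V E W f x = \<mu> * f x" "\<mu> \<noteq> of_real c"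
  shows "(\<Sum>x\<in>V. of_real (\<psi> x) * f x) = 0"
proof -
  have "(\<Sum>x\<in>V. of_real (\<psi> x) * Hop V E W f x) = (\<Sum>x\<in>V. Hop V E W (\<lambda>v. of_real (\<psi> v)) x * f x)"
    by (rule Hop_sym[OF sg])
  also have "\<dots> = of_real c * (\<Sum>x\<in>V. of_real (\<psi> x) * f x)"
    using gs by (simp add: sum_distrib_left algebra_simps)
  finally have "\<mu> * (\<Sum>x\<in>V. of_real (\<psi> x) * f x) = of_real c * (\<Sum>x\<in>V. of_real (\<psi> x) * f x)"
    using assms(1) by (simp add: sum_distrib_left algebra_simps)
  thus ?thesis using assms(2) by simp
qed

lemma eig_real:
  assumes "\<forall>x\<in>V. Hop V E W f x = \<mu> * f x" "\<exists>x\<in>V. f x \<noteq> 0"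
  shows "NN f > 0" "\<mu> = of_real (c + DD f / (2 * NN f))"
proof -
  obtain x where x: "x \<in> V" "f x \<noteq> 0" using assms(2) by blast
  show np: "NN f > 0" unfolding NN_def by (rule sum_pos2[OF fin x(1)]) (use x in auto)
  have "(\<Sum>x\<in>V. cnj (f x) * (Hop V E W f x - of_real c * f x)) = (\<Sum>x\<in>V. (\<mu> - of_real c) * (f x * cnj (f x)))"
    using assms(1) by (intro sum.cong refl) (simp add: algebra_simps)
  also have "\<dots> = (\<mu> - of_real c) * of_real (NN f)"
    unfolding NN_def sum_distrib_left[symmetric] by (simp only: of_real_sum complex_norm_square)
  finally have "(\<mu> - of_real c) * of_real (NN f) = of_real (DD f / 2)" using qform by simp
  moreover have nz: "(of_real (NN f) :: complex) \<noteq> 0" using np by simp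
  ultimately have "\<mu> - of_real c = of_real (DD f / 2) / of_real (NN f)" by (simp add: eq_divide_eq mult_ac)
  also have "\<dots> = of_real (DD f / (2 * NN f))" by (simp add: of_real_divide)
  finally show "\<mu> = of_real (c + DD f / (2 * NN f))" by (simp add: algebra_simps)
qed

lemma gap_eig:
  assumes norm1: "(\<Sum>x\<in>V. \<psi> x ^ 2) = 1"
    and paths: "\<forall>x\<in>V. \<forall>y\<in>V. x \<noteq> y \<longrightarrow> edge_simple_path E x y (\<Gamma> x y)"
    and ev: "\<forall>x\<in>V. Hop V E W f x = \<mu> * f x" "\<exists>x\<in>V. f x \<noteq> 0"
    and orth: "(\<Sum>x\<in>V. of_real (\<psi> x) * f x) = 0"
  shows "\<mu> = of_real (Re \<mu>) \<and> Re \<mu> \<noteq> c \<and> 1 / kappa' V E \<psi> \<Gamma> \<le> Re \<mu> - c"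
proof -
  note er = eig_real[OF ev]
  have co: "4 * NN f \<le> kappa' V E \<psi> \<Gamma> * DD f" by (rule core[OF norm1 paths orth])
  have re: "Re \<mu> = c + DD f / (2 * NN f)" using er(2) by simp
  have dd: "DD f \<ge> 0" by (rule DD_nonneg)
  have ddp: "DD f > 0" using co er(1) dd by (cases "DD f = 0") auto
  have kp: "kappa' V E \<psi> \<Gamma> > 0"
  proof (rule ccontr)
    assume "\<not> kappa' V E \<psi> \<Gamma> > 0"
    hence "kappa' V E \<psi> \<Gamma> * DD f \<le> 0" using dd by (simp add: mult_nonpos_nonneg)
    thus False using co er(1) by linarith
  qed
  have "1 / kappa' V E \<psi> \<Gamma> \<le> DD f / (2 * NN f)"
  proof -
    have a: "2 * NN f \<le> kappa' V E \<psi> \<Gamma> * DD f" using co er(1) by linarith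
    have p: "kappa' V E \<psi> \<Gamma> * (2 * NN f) > 0" using kp er(1) by simp
    have "2 * NN f / (kappa' V E \<psi> \<Gamma> * (2 * NN f)) \<le> kappa' V E \<psi> \<Gamma> * DD f / (kappa' V E \<psi> \<Gamma> * (2 * NN f))"
      using a p by (intro divide_right_mono) auto
    moreover have "2 * NN f / (kappa' V E \<psi> \<Gamma> * (2 * NN f)) = 1 / kappa' V E \<psi> \<Gamma>" using er(1) by simp
    moreover have "kappa' V E \<psi> \<Gamma> * DD f / (kappa' V E \<psi> \<Gamma> * (2 * NN f)) = DD f / (2 * NN f)" using kp by simp
    ultimately show ?thesis by simp
  qed
  thus ?thesis using re er ddp by auto
qed


lemma idx: "distinct us \<Longrightarrow> (\<Sum>k<length us. g (us ! k)) = (\<Sum>u\<in>set us. g u)"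
proof -
  assume d: "distinct us"
  have "(\<Sum>u\<in>set us. g u) = sum_list (map g us)" using d by (simp add: sum_list_distinct_conv_sum_set)
  also have "\<dots> = (\<Sum>k = 0..<length us. g (us ! k))" by (simp add: sum_list_sum_nth)
  finally show ?thesis by (simp add: atLeast0LessThan)
qed

definition extv :: "'a \<Rightarrow> 'a list \<Rightarrow> ('a \<Rightarrow> complex) \<Rightarrow> 'a \<Rightarrow> complex" where
  "extv x0 us w x = (if x \<in> set us then w x else if x = x0 then - (\<Sum>u\<in>set us. of_real (\<psi> u) * w u) / of_real (\<psi> x0) else 0)"

definition Rm :: "'a \<Rightarrow> 'a list \<Rightarrow> complex mat" where
  "Rm x0 us = mat (length us) (length us) (\<lambda>(j, k). Hop V E W (extv x0 us (\<lambda>x. if x = us ! k then 1 else 0)) (us ! j))"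


lemma ext_lin:
  assumes d: "distinct us" and x0: "x0 \<notin> set us"
  shows "extv x0 us w x = (\<Sum>k<length us. w (us ! k) * extv x0 us (\<lambda>x. if x = us ! k then 1 else 0) x)"
proof -
  have "(\<Sum>k<length us. w (us ! k) * extv x0 us (\<lambda>x. if x = us ! k then 1 else 0) x)
      = (\<Sum>u\<in>set us. w u * extv x0 us (\<lambda>x. if x = u then 1 else 0) x)"
    by (rule idx[OF d, of "\<lambda>u. w u * extv x0 us (\<lambda>x. if x = u then 1 else 0) x"])
  also have "\<dots> = extv x0 us w x"
  proof (cases "x \<in> set us")
    case True
    have "(\<Sum>u\<in>set us. w u * extv x0 us (\<lambda>x. if x = u then 1 else 0) x) = (\<Sum>u\<in>set us. if x = u then w u else 0)"
      using True unfolding extv_def by (intro sum.cong refl) simp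
    also have "\<dots> = w x" using True by simp
    finally show ?thesis using True unfolding extv_def[of x0 us w x] by simp
  next
    case False
    show ?thesis
    proof (cases "x = x0")
      case True
      have "(\<Sum>u\<in>set us. w u * extv x0 us (\<lambda>x. if x = u then 1 else 0) x)
          = (\<Sum>u\<in>set us. w u * (- of_real (\<psi> u) / of_real (\<psi> x0)))"
        using True x0 unfolding extv_def by (intro sum.cong refl) (simp add: if_distrib cong: if_cong)
      also have "\<dots> = - (\<Sum>u\<in>set us. of_real (\<psi> u) * w u) / of_real (\<psi> x0)"
        by (simp add: sum_divide_distrib sum_negf[symmetric] mult.commute)
      finally show ?thesis using True x0 unfolding extv_def[of x0 us w x] by simp
    next
      case False2: False
      thus ?thesis using False unfolding extv_def by simp
    qed
  qed
  finally show ?thesis ..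
qed


lemma Rm_mult:
  assumes d: "distinct us" and x0: "x0 \<notin> set us"
  shows "Rm x0 us *\<^sub>v vec (length us) (\<lambda>k. w (us ! k)) = vec (length us) (\<lambda>j. Hop V E W (extv x0 us w) (us ! j))"
proof (rule eq_vecI)
  fix j assume "j < dim_vec (vec (length us) (\<lambda>j. Hop V E W (extv x0 us w) (us ! j)))"
  hence j: "j < length us" by simp
  have "(Rm x0 us *\<^sub>v vec (length us) (\<lambda>k. w (us ! k))) $ j
      = (\<Sum>k<length us. Hop V E W (extv x0 us (\<lambda>x. if x = us ! k then 1 else 0)) (us ! j) * w (us ! k))"
    using j unfolding Rm_def by (simp add: scalar_prod_def atLeast0LessThan)
  also have "\<dots> = Hop V E W (\<lambda>x. \<Sum>k<length us. w (us ! k) * extv x0 us (\<lambda>x. if x = us ! k then 1 else 0) x) (us ! j)"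
    by (subst Hop_lin) (auto simp: mult.commute)
  also have "(\<lambda>x. \<Sum>k<length us. w (us ! k) * extv x0 us (\<lambda>x. if x = us ! k then 1 else 0) x) = extv x0 us w"
    by (rule ext) (rule ext_lin[OF d x0, symmetric])
  finally show "(Rm x0 us *\<^sub>v vec (length us) (\<lambda>k. w (us ! k))) $ j = vec (length us) (\<lambda>j. Hop V E W (extv x0 us w) (us ! j)) $ j"
    using j by simp
qed (simp add: Rm_def)


lemma ext_eq:
  assumes us: "set us = V - {x0}" and x0: "x0 \<in> V" and orth: "(\<Sum>x\<in>V. of_real (\<psi> x) * f x) = 0"
  shows "\<forall>x\<in>V. extv x0 us f x = f x"
proof -
  have "(\<Sum>x\<in>V. of_real (\<psi> x) * f x) = of_real (\<psi> x0) * f x0 + (\<Sum>x\<in>set us. of_real (\<psi> x) * f x)"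
    unfolding us using x0 fin by (simp add: sum.remove)
  hence "f x0 = - (\<Sum>x\<in>set us. of_real (\<psi> x) * f x) / of_real (\<psi> x0)"
    using orth pos x0 by (simp add: eq_divide_eq add_eq_0_iff less_imp_neq[symmetric])
  thus ?thesis using us unfolding extv_def by auto
qed

lemma ext_orth:
  assumes us: "set us = V - {x0}" and x0: "x0 \<in> V"
  shows "(\<Sum>x\<in>V. of_real (\<psi> x) * extv x0 us w x) = 0"
proof -
  have "(\<Sum>x\<in>V. of_real (\<psi> x) * extv x0 us w x) = of_real (\<psi> x0) * extv x0 us w x0 + (\<Sum>x\<in>set us. of_real (\<psi> x) * extv x0 us w x)"
    unfolding us using x0 fin by (simp add: sum.remove)
  also have "(\<Sum>x\<in>set us. of_real (\<psi> x) * extv x0 us w x) = (\<Sum>x\<in>set us. of_real (\<psi> x) * w x)"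
    unfolding extv_def by simp
  also have "extv x0 us w x0 = - (\<Sum>u\<in>set us. of_real (\<psi> u) * w u) / of_real (\<psi> x0)"
    using us unfolding extv_def by simp
  finally show ?thesis using pos x0 by (simp add: less_imp_neq[symmetric])
qed


lemma Rm_carrier: "Rm x0 us \<in> carrier_mat (length us) (length us)" by (simp add: Rm_def)

lemma S_sub:
  assumes us: "set us = V - {x0}" "distinct us" and x0: "x0 \<in> V"
  shows "eigenvalues V E W - {c} \<subseteq> {l. of_real l \<in> spectrum (Rm x0 us)}"
proof
  fix l assume l: "l \<in> eigenvalues V E W - {c}"
  then obtain f where f: "\<exists>x\<in>V. f x \<noteq> 0" "\<forall>x\<in>V. Hop V E W f x = of_real l * f x" and lc: "l \<noteq> c"
    unfolding eigenvalues_def by auto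
  have orth: "(\<Sum>x\<in>V. of_real (\<psi> x) * f x) = 0" by (rule orth_of_eig[OF f(2)]) (use lc in simp)
  have ee: "\<forall>x\<in>V. extv x0 us f x = f x" by (rule ext_eq[OF us(1) x0 orth])
  have x0n: "x0 \<notin> set us" using us by auto
  have uV: "us ! j \<in> V" if "j < length us" for j using that us(1) nth_mem by blast
  define v where "v = vec (length us) (\<lambda>k. f (us ! k))"
  have "Rm x0 us *\<^sub>v v = vec (length us) (\<lambda>j. Hop V E W (extv x0 us f) (us ! j))"
    unfolding v_def by (rule Rm_mult[OF us(2) x0n])
  also have "\<dots> = vec (length us) (\<lambda>j. of_real l * f (us ! j))"
    using Hop_cong[OF ee] f(2) uV by (intro eq_vecI) auto
  also have "\<dots> = of_real l \<cdot>\<^sub>v v" unfolding v_def by (intro eq_vecI) auto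
  finally have mv: "Rm x0 us *\<^sub>v v = of_real l \<cdot>\<^sub>v v" .
  have vnz: "v \<noteq> 0\<^sub>v (length us)"
  proof
    assume "v = 0\<^sub>v (length us)"
    hence "f (us ! k) = 0" if "k < length us" for k using that unfolding v_def
      by (metis index_vec index_zero_vec(1))
    hence fu: "\<forall>u\<in>set us. f u = 0" by (auto simp: in_set_conv_nth)
    hence "extv x0 us f x0 = 0" using x0n unfolding extv_def by simp
    hence "f x0 = 0" using ee x0 by simp
    thus False using f(1) fu us(1) by auto
  qed
  have "eigenvector (Rm x0 us) v (of_real l)"
    unfolding eigenvector_def using mv vnz by (auto simp: Rm_def v_def)
  thus "l \<in> {l. of_real l \<in> spectrum (Rm x0 us)}" unfolding spectrum_def eigenvalue_def by auto
qed

lemma S_fin: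
  assumes us: "set us = V - {x0}" "distinct us" and x0: "x0 \<in> V"
  shows "finite (eigenvalues V E W - {c})"
proof (rule finite_subset[OF S_sub[OF us x0]])
  have "finite (of_real -` spectrum (Rm x0 us) :: real set)"
    by (rule finite_vimageI[OF card_finite_spectrum(1)[OF Rm_carrier]]) (simp add: inj_on_def)
  thus "finite {l::real. of_real l \<in> spectrum (Rm x0 us)}" by (simp add: vimage_def)
qed

lemma S_ne:
  assumes norm1: "(\<Sum>x\<in>V. \<psi> x ^ 2) = 1"
    and paths: "\<forall>x\<in>V. \<forall>y\<in>V. x \<noteq> y \<longrightarrow> edge_simple_path E x y (\<Gamma> x y)"
    and us: "set us = V - {x0}" "distinct us" "us \<noteq> []" and x0: "x0 \<in> V"
  shows "eigenvalues V E W - {c} \<noteq> {}"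
proof -
  let ?m = "length us"
  have x0n: "x0 \<notin> set us" using us by auto
  obtain \<mu> where "\<mu> \<in> spectrum (Rm x0 us)" using spectrum_non_empty[OF Rm_carrier] us(3) by auto
  then obtain v where ev: "eigenvector (Rm x0 us) v \<mu>" unfolding spectrum_def eigenvalue_def by auto
  hence v: "v \<in> carrier_vec ?m" "v \<noteq> 0\<^sub>v ?m" "Rm x0 us *\<^sub>v v = \<mu> \<cdot>\<^sub>v v" unfolding eigenvector_def by (auto simp: Rm_def)
  define w where "w = (\<lambda>x. v $ (SOME k. k < ?m \<and> us ! k = x))"
  have wk: "w (us ! k) = v $ k" if "k < ?m" for k
  proof -
    have "(SOME k'. k' < ?m \<and> us ! k' = us ! k) = k"
      using that nth_eq_iff_index_eq[OF us(2)] by (intro some_equality) auto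
    thus ?thesis unfolding w_def by simp
  qed
  have vw: "vec ?m (\<lambda>k. w (us ! k)) = v" using v(1) wk by (intro eq_vecI) auto
  define f where "f = extv x0 us w"
  have fu: "f (us ! k) = v $ k" if "k < ?m" for k unfolding f_def extv_def using that wk by simp
  have "vec ?m (\<lambda>j. Hop V E W f (us ! j)) = \<mu> \<cdot>\<^sub>v v"
    unfolding f_def Rm_mult[OF us(2) x0n, symmetric] vw by (rule v(3))
  hence Hu: "Hop V E W f (us ! j) = \<mu> * f (us ! j)" if "j < ?m" for j
    using that fu v(1) by (metis index_smult_vec(1) index_vec carrier_vecD)
  hence Hus: "\<forall>u\<in>set us. Hop V E W f u = \<mu> * f u" by (auto simp: in_set_conv_nth)
  have orth: "(\<Sum>x\<in>V. of_real (\<psi> x) * f x) = 0" unfolding f_def by (rule ext_orth[OF us(1) x0])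
  have "(\<Sum>x\<in>V. of_real (\<psi> x) * Hop V E W f x) = (\<Sum>x\<in>V. Hop V E W (\<lambda>v. of_real (\<psi> v)) x * f x)"
    by (rule Hop_sym[OF sg])
  also have "\<dots> = of_real c * (\<Sum>x\<in>V. of_real (\<psi> x) * f x)"
    using gs by (simp add: sum_distrib_left algebra_simps)
  finally have hs: "(\<Sum>x\<in>V. of_real (\<psi> x) * Hop V E W f x) = 0" using orth by simp
  have split: "(\<Sum>x\<in>V. of_real (\<psi> x) * g x) = of_real (\<psi> x0) * g x0 + (\<Sum>x\<in>set us. of_real (\<psi> x) * g x)" for g :: "'a \<Rightarrow> complex"
    unfolding us(1) using x0 fin by (simp add: sum.remove)
  have "(\<Sum>x\<in>set us. of_real (\<psi> x) * Hop V E W f x) = \<mu> * (\<Sum>x\<in>set us. of_real (\<psi> x) * f x)"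
    using Hus by (simp add: sum_distrib_left algebra_simps)
  moreover have A1: "of_real (\<psi> x0) * Hop V E W f x0 = - (\<Sum>x\<in>set us. of_real (\<psi> x) * Hop V E W f x)"
    using hs split[of "Hop V E W f"] by (simp add: eq_neg_iff_add_eq_0)
  moreover have A2: "of_real (\<psi> x0) * f x0 = - (\<Sum>x\<in>set us. of_real (\<psi> x) * f x)"
    using orth split[of f] by (simp add: eq_neg_iff_add_eq_0)
  ultimately have "of_real (\<psi> x0) * Hop V E W f x0 = \<mu> * (- (\<Sum>x\<in>set us. of_real (\<psi> x) * f x))"
    by (simp only: mult_minus_right)
  also have "\<dots> = \<mu> * (of_real (\<psi> x0) * f x0)" by (simp only: A2)
  finally have "of_real (\<psi> x0) * Hop V E W f x0 = \<mu> * (of_real (\<psi> x0) * f x0)" .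
  also have "\<mu> * (of_real (\<psi> x0) * f x0) = of_real (\<psi> x0) * (\<mu> * f x0)" by (rule mult.left_commute)
  finally have e0: "of_real (\<psi> x0) * Hop V E W f x0 = of_real (\<psi> x0) * (\<mu> * f x0)" .
  have p0: "(of_real (\<psi> x0) :: complex) \<noteq> 0" using pos x0 by auto
  have H0: "Hop V E W f x0 = \<mu> * f x0" using e0 p0 by (simp only: mult_cancel_left) simp
  have Hall: "\<forall>x\<in>V. Hop V E W f x = \<mu> * f x" using Hus H0 us(1) by auto
  obtain k where k: "k < ?m" "v $ k \<noteq> 0"
  proof (rule ccontr)
    assume "\<not> thesis"
    hence "\<forall>k<?m. v $ k = 0" using that by blast
    hence "v = 0\<^sub>v ?m" using v(1) by (intro eq_vecI) auto
    thus False using v(2) by simp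
  qed
  have nz: "\<exists>x\<in>V. f x \<noteq> 0" using k fu[OF k(1)] nth_mem[OF k(1)] us(1) by auto
  have g: "\<mu> = of_real (Re \<mu>) \<and> Re \<mu> \<noteq> c \<and> 1 / kappa' V E \<psi> \<Gamma> \<le> Re \<mu> - c"
    by (rule gap_eig[OF norm1 paths Hall nz orth])
  define r where "r = Re \<mu>"
  have mr: "\<mu> = of_real r" and rc: "r \<noteq> c" using g unfolding r_def by blast+
  have "\<forall>x\<in>V. Hop V E W f x = of_real r * f x" using Hall unfolding mr .
  hence "r \<in> eigenvalues V E W" unfolding eigenvalues_def using nz by blast
  hence "r \<in> eigenvalues V E W - {c}" using rc by simp
  thus ?thesis by blast
qed

end


theorem mainTheorem6:
  fixes V :: "'a set" and E :: "'a \<Rightarrow> 'a \<Rightarrow> bool" and W :: "'a \<Rightarrow> real"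
    and \<psi> :: "'a \<Rightarrow> real" and \<Gamma> :: "'a \<Rightarrow> 'a \<Rightarrow> 'a list"
  assumes "simple_graph V E" and "graph_connected V E" and "card V \<ge> 2"
    and "\<forall>x\<in>V. \<psi> x > 0" and "(\<Sum>x\<in>V. \<psi> x ^ 2) = 1"
    and "\<forall>x\<in>V. Hop V E W (\<lambda>v. of_real (\<psi> v)) x = of_real (ground_energy V E W) * of_real (\<psi> x)"
    and "\<forall>x\<in>V. \<forall>y\<in>V. x \<noteq> y \<longrightarrow> edge_simple_path E x y (\<Gamma> x y)"
  shows "spectral_gap V E W \<ge> 1 / kappa' V E \<psi> \<Gamma>"
proof -
  interpret gsctx V E W \<psi> "ground_energy V E W"
    using assms(1,4,6) by unfold_locales auto
  have "V \<noteq> {}" using assms(3) by (intro notI) simp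
  then obtain x0 where x0: "x0 \<in> V" by blast
  obtain us where us: "set us = V - {x0}" "distinct us" using finite_distinct_list[of "V - {x0}"] fin by blast
  have c1: "card (V - {x0}) \<ge> 1" using assms(3) x0 fin by (simp add: card_Diff_singleton)
  have une: "us \<noteq> []"
  proof
    assume "us = []"
    hence "V - {x0} = {}" using us by simp
    hence "card (V - {x0}) = 0" by (simp only: card.empty)
    thus False using c1 by linarith
  qed
  let ?S = "eigenvalues V E W - {ground_energy V E W}"
  have sf: "finite ?S" by (rule S_fin[OF us x0])
  have sn: "?S \<noteq> {}" by (rule S_ne[OF assms(5) assms(7) us une x0])
  have mem: "Min ?S \<in> ?S" by (rule Min_in[OF sf sn])
  hence ne: "Min ?S \<noteq> ground_energy V E W" and mem2: "Min ?S \<in> eigenvalues V E W" by blast+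
  from mem2 obtain f where f: "\<exists>x\<in>V. f x \<noteq> 0" "\<forall>x\<in>V. Hop V E W f x = of_real (Min ?S) * f x"
    unfolding eigenvalues_def mem_Collect_eq by blast
  have orth: "(\<Sum>x\<in>V. of_real (\<psi> x) * f x) = 0" by (rule orth_of_eig[OF f(2)]) (use ne in simp)
  have "1 / kappa' V E \<psi> \<Gamma> \<le> Re (of_real (Min ?S)) - ground_energy V E W"
    using gap_eig[OF assms(5) assms(7) f(2) f(1) orth] by blast
  hence "1 / kappa' V E \<psi> \<Gamma> \<le> Min ?S - ground_energy V E W" by (simp only: Re_complex_of_real)
  thus ?thesis unfolding spectral_gap_def .
qed

end
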